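(* Let $(X,d)$ be a nonempty complete and rectifiably path-connected metric space and let $F:X\rightarrow K(X)$ be a set-valued uniform pointwise contraction with modulus $\beta\in[0,1)$. Then $\mathrm{Fix}(F)\neq\varnothing$.
   Context: $\Pi$ is the set of finite partitions $0=t_0<\cdots<t_n=1$ of $[0,1]$; the length of a continuous path $p:[0,1]\to X$ is $l(p)=\sup_{\pi\in\Pi}\sum_{i=1}^n d(p(t_{i-1}),p(t_i))$. $X$ is rectifiably path-connected if every two points $x,y$ are joined by a continuous path $p$ with $p(0)=x$, $p(1)=y$, $l(p)<\infty$. $K(X)$ is the set of nonempty compact subsets of $X$; $H$ is the Hausdorff distance. $F$ is a set-valued uniform pointwise contraction with modulus $\beta$ if every $x\in X$ has an open neighborhood $N(x)$ with $H(F(x),F(y))\le\beta\, d(x,y)$ for all $y\in N(x)$. $\mathrm{Fix}(F)=\{x:x\in F(x)\}$. *)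

theory Defs
  imports "HOL-Analysis.Analysis"
begin

definition is_partition :: "(nat \<Rightarrow> real) \<Rightarrow> nat \<Rightarrow> bool" where
  "is_partition t n \<longleftrightarrow> t 0 = 0 \<and> t n = 1 \<and> (\<forall>i<n. t i < t (Suc i))"

definition variation_sums :: "(real \<Rightarrow> 'a::metric_space) \<Rightarrow> real set" where
  "variation_sums p = {(\<Sum>i\<in>{1..n}. dist (p (t (i - 1))) (p (t i))) | t n. is_partition t n}"

definition path_length :: "(real \<Rightarrow> 'a::metric_space) \<Rightarrow> ereal" where
  "path_length p = (SUP s\<in>variation_sums p. ereal s)"

definition rectifiably_path_connected :: "'a::metric_space set \<Rightarrow> bool" where
  "rectifiably_path_connected X \<longleftrightarrow>
     (\<forall>x\<in>X. \<forall>y\<in>X. \<exists>p. continuous_on {0..1} p \<and> p ` {0..1} \<subseteq> X \<and>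
        p 0 = x \<and> p 1 = y \<and> path_length p < \<infinity>)"

text \<open>Hausdorff distance (used on nonempty compact sets).\<close>
definition hausdorff_dist :: "'a::metric_space set \<Rightarrow> 'a set \<Rightarrow> real" where
  "hausdorff_dist A B = max (SUP a\<in>A. infdist a B) (SUP b\<in>B. infdist b A)"

definition uniform_pointwise_contraction ::
  "'a::metric_space set \<Rightarrow> ('a \<Rightarrow> 'a set) \<Rightarrow> real \<Rightarrow> bool" where
  "uniform_pointwise_contraction X F \<beta> \<longleftrightarrow>
     (\<forall>x\<in>X. \<exists>N. openin (top_of_set X) N \<and> x \<in> N \<and>
        (\<forall>y\<in>N. hausdorff_dist (F x) (F y) \<le> \<beta> * dist x y))"

end

theory Submission
  imports Defs
begin

lemma hd_infdist:
  fixes A B :: "'a::metric_space set"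
  assumes "compact A" "B \<noteq> {}" "a \<in> A"
  shows "infdist a B \<le> hausdorff_dist A B"
proof -
  have "compact ((\<lambda>a. infdist a B) ` A)"
    by (intro compact_continuous_image continuous_intros assms)
  then have "bdd_above ((\<lambda>a. infdist a B) ` A)"
    by (simp add: bounded_imp_bdd_above compact_imp_bounded)
  then have "infdist a B \<le> (SUP a\<in>A. infdist a B)"
    using assms by (intro cSUP_upper) auto
  then show ?thesis unfolding hausdorff_dist_def by linarith
qed

lemma hd_sym: "hausdorff_dist A B = hausdorff_dist B A"
  unfolding hausdorff_dist_def by (simp add: max.commute)

lemma hd_nearest:
  fixes A B :: "'a::metric_space set"
  assumes "compact A" "compact B" "B \<noteq> {}" "a \<in> A"
  shows "\<exists>b\<in>B. dist a b \<le> hausdorff_dist A B"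
proof -
  obtain b where b: "b \<in> B" "\<forall>y\<in>B. dist a b \<le> dist a y"
  proof -
    have "continuous_on B (dist a)" by (intro continuous_intros)
    then show ?thesis using continuous_attains_inf[OF assms(2,3), of "\<lambda>y. dist a y"] that by auto
  qed
  have "dist a b \<le> infdist a B"
    unfolding infdist_notempty[OF assms(3)]
    using b assms(3) by (intro cINF_greatest) auto
  with hd_infdist[OF assms(1,3,4)] b show ?thesis by force
qed

lemma hd_tri1:
  fixes A B C :: "'a::metric_space set"
  assumes "compact A" "compact B" "compact C" "A \<noteq> {}" "B \<noteq> {}" "C \<noteq> {}"
  shows "(SUP a\<in>A. infdist a C) \<le> hausdorff_dist A B + hausdorff_dist B C"
proof (rule cSUP_least)
  show "A \<noteq> {}" by fact
  fix a assume "a \<in> A"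
  then obtain b where b: "b \<in> B" "dist a b \<le> hausdorff_dist A B"
    using hd_nearest assms by blast
  have "infdist a C \<le> infdist b C + dist a b" by (rule infdist_triangle)
  also have "infdist b C \<le> hausdorff_dist B C" using hd_infdist assms b by blast
  finally show "infdist a C \<le> hausdorff_dist A B + hausdorff_dist B C" using b by linarith
qed

lemma hd_triangle:
  fixes A B C :: "'a::metric_space set"
  assumes "compact A" "compact B" "compact C" "A \<noteq> {}" "B \<noteq> {}" "C \<noteq> {}"
  shows "hausdorff_dist A C \<le> hausdorff_dist A B + hausdorff_dist B C"
proof -
  have 1: "(SUP a\<in>A. infdist a C) \<le> hausdorff_dist A B + hausdorff_dist B C"
    using hd_tri1 assms by blast
  have "(SUP c\<in>C. infdist c A) \<le> hausdorff_dist C B + hausdorff_dist B A"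
    using hd_tri1 assms by blast
  then have 2: "(SUP c\<in>C. infdist c A) \<le> hausdorff_dist A B + hausdorff_dist B C"
    using hd_sym by (metis add.commute)
  show ?thesis using 1 2 unfolding hausdorff_dist_def[of A C] by simp
qed

lemma real_ind:
  fixes P :: "real \<Rightarrow> real \<Rightarrow> bool"
  assumes trans: "\<And>a b c. 0 \<le> a \<Longrightarrow> a \<le> b \<Longrightarrow> b \<le> c \<Longrightarrow> c \<le> 1 \<Longrightarrow> P a b \<Longrightarrow> P b c \<Longrightarrow> P a c"
    and loc: "\<And>s. 0 \<le> s \<Longrightarrow> s \<le> 1 \<Longrightarrow> \<exists>\<delta>>0. \<forall>a b. 0 \<le> a \<and> a \<le> s \<and> s \<le> b \<and> b \<le> 1 \<and> s - a < \<delta> \<and> b - s < \<delta> \<longrightarrow> P a b"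
    and a: "0 \<le> a" "a \<le> b" "b \<le> 1"
  shows "P a b"
proof -
  define T where "T = {b. a \<le> b \<and> b \<le> 1 \<and> (\<forall>c. a \<le> c \<and> c \<le> b \<longrightarrow> P a c)}"
  obtain d0 where d0: "d0 > 0" "\<forall>x y. 0 \<le> x \<and> x \<le> a \<and> a \<le> y \<and> y \<le> 1 \<and> a - x < d0 \<and> y - a < d0 \<longrightarrow> P x y"
    using loc[of a] a by auto
  have Paa: "P a a" using d0 a by auto
  have aT: "a \<in> T" unfolding T_def using Paa a by auto
  have bdd: "bdd_above T" unfolding T_def by (auto intro: bdd_aboveI[of _ 1])
  define m where "m = Sup T"
  have am: "a \<le> m" unfolding m_def using aT bdd by (rule cSup_upper)
  have m1: "m \<le> 1" unfolding m_def using aT by (intro cSup_least) (auto simp: T_def)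
  obtain \<delta> where \<delta>: "\<delta> > 0" "\<forall>x y. 0 \<le> x \<and> x \<le> m \<and> m \<le> y \<and> y \<le> 1 \<and> m - x < \<delta> \<and> y - m < \<delta> \<longrightarrow> P x y"
    using loc[of m] am m1 a by auto
  obtain b0 where b0: "b0 \<in> T" "m - \<delta> < b0"
  proof (cases "m = a")
    case True then show ?thesis using that aT \<delta> by auto
  next
    case False
    then have "m - \<delta> < Sup T" using \<delta> m_def by auto
    then show ?thesis using that less_cSupD[OF _ \<open>m - \<delta> < Sup T\<close>] aT by blast
  qed
  have b0m: "b0 \<le> m" unfolding m_def using b0(1) bdd by (rule cSup_upper)
  have claim: "P a c" if c: "a \<le> c" "c \<le> min 1 (m + \<delta>/2)" for c
  proof (cases "c < m")
    case True
    then obtain b' where "b' \<in> T" "c < b'" using less_cSupD[of T c] aT unfolding m_def by blast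
    then show ?thesis using c unfolding T_def by auto
  next
    case False
    have "P a b0" using b0 unfolding T_def by auto
    moreover have "P b0 c" using \<delta>(2)[rule_format, of b0 c] b0 b0m False c a unfolding T_def by auto
    ultimately show ?thesis using trans[of a b0 c] b0 b0m False c a unfolding T_def by auto
  qed
  have "min 1 (m + \<delta>/2) \<in> T" unfolding T_def using claim am m1 \<delta> by auto
  then have "min 1 (m + \<delta>/2) \<le> m" unfolding m_def using bdd by (rule cSup_upper)
  then have "m = 1" using m1 \<delta> by (auto simp: min_def split: if_splits)
  then show ?thesis using claim a \<delta> by auto
qed

lemma greedy:
  fixes G :: "real \<Rightarrow> 'a::metric_space set"
  assumes G: "\<And>s. 0 \<le> s \<Longrightarrow> s \<le> 1 \<Longrightarrow> G s \<noteq> {} \<and> compact (G s)"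
    and H: "\<And>a b. 0 \<le> a \<Longrightarrow> a \<le> b \<Longrightarrow> b \<le> 1 \<Longrightarrow> hausdorff_dist (G a) (G b) \<le> K a b"
    and K: "\<And>a b c. 0 \<le> a \<Longrightarrow> a \<le> b \<Longrightarrow> b \<le> c \<Longrightarrow> c \<le> 1 \<Longrightarrow> K a b + K b c \<le> K a c"
    and K0: "\<And>a. 0 \<le> a \<Longrightarrow> a \<le> 1 \<Longrightarrow> 0 \<le> K a a"
    and u: "u \<in> G 0"
    and S: "finite S" "S \<subseteq> {0..1}"
  shows "\<exists>f. f 0 = u \<and> (\<forall>s\<in>insert 0 S. f s \<in> G s) \<and>
           (\<forall>a\<in>insert 0 S. \<forall>b\<in>insert 0 S. a \<le> b \<longrightarrow> dist (f a) (f b) \<le> K a b)"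
  using S
proof (induction S rule: finite_linorder_max_induct)
  case empty
  then show ?case using u K0[of 0] by (intro exI[of _ "\<lambda>_. u"]) auto
next
  case (insert b A)
  then obtain f where f: "f 0 = u" "\<forall>s\<in>insert 0 A. f s \<in> G s"
    "\<forall>a\<in>insert 0 A. \<forall>b\<in>insert 0 A. a \<le> b \<longrightarrow> dist (f a) (f b) \<le> K a b" by auto
  have b01: "0 \<le> b" "b \<le> 1" using insert by auto
  show ?case
  proof (cases "b = 0")
    case True
    then show ?thesis using f by auto
  next
    case False
    define a0 where "a0 = Max (insert 0 A)"
    have a0in: "a0 \<in> insert 0 A" unfolding a0_def using insert by (intro Max_in) auto
    have a0ge: "x \<le> a0" if "x \<in> insert 0 A" for x unfolding a0_def using insert that by (intro Max_ge) auto
    have a0b: "a0 < b" using a0in insert False b01 by auto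
    have a001: "0 \<le> a0" "a0 \<le> 1" using a0ge[of 0] a0b b01 by auto
    obtain z where z: "z \<in> G b" "dist (f a0) z \<le> hausdorff_dist (G a0) (G b)"
      using hd_nearest[of "G a0" "G b" "f a0"] G[of a0] G[of b] a001 b01 f(2) a0in by blast
    have bnot: "b \<notin> insert 0 A" using insert False by auto
    define f' where "f' = f(b := z)"
    have "dist (f' a) (f' c) \<le> K a c" if ac: "a \<in> insert 0 (insert b A)" "c \<in> insert 0 (insert b A)" "a \<le> c" for a c
    proof -
      have a1: "0 \<le> a" "a \<le> 1" "0 \<le> c" "c \<le> 1" using ac insert b01 by auto
      show ?thesis
      proof (cases "c = b")
        case cb: True
        show ?thesis
        proof (cases "a = b")
          case True then show ?thesis using cb K0 a1 by simp
        next
          case False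
          then have ain: "a \<in> insert 0 A" using ac by auto
          have "dist (f' a) (f' c) = dist (f a) z" using cb False unfolding f'_def by simp
          also have "\<dots> \<le> dist (f a) (f a0) + dist (f a0) z" by (rule dist_triangle)
          also have "\<dots> \<le> K a a0 + K a0 b"
            using f(3) ain a0in a0ge[OF ain] z H[of a0 b] a001 b01 a0b by fastforce
          also have "\<dots> \<le> K a b" using K[of a a0 b] a1 a0ge[OF ain] a0b b01 by auto
          finally show ?thesis using cb by simp
        qed
      next
        case False
        then have cin: "c \<in> insert 0 A" using ac by auto
        then have "c < b" using insert False by auto
        then have "a \<noteq> b" using ac by auto
        then have "a \<in> insert 0 A" using ac by auto
        then show ?thesis using f(3) cin ac False \<open>a \<noteq> b\<close> unfolding f'_def by auto
      qed
    qed
    moreover have "\<forall>s\<in>insert 0 (insert b A). f' s \<in> G s" using f z bnot unfolding f'_def by auto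
    moreover have "f' 0 = u" using f False unfolding f'_def by auto
    ultimately show ?thesis by blast
  qed
qed

lemma tych:
  fixes G :: "real \<Rightarrow> 'a::metric_space set"
  assumes G: "\<And>s. 0 \<le> s \<Longrightarrow> s \<le> 1 \<Longrightarrow> G s \<noteq> {} \<and> compact (G s)"
    and fin: "\<And>S. finite S \<Longrightarrow> S \<subseteq> {0..1} \<Longrightarrow> \<exists>f. f 0 = u \<and> (\<forall>s\<in>insert 0 S. f s \<in> G s) \<and>
           (\<forall>a\<in>insert 0 S. \<forall>b\<in>insert 0 S. a \<le> b \<longrightarrow> dist (f a) (f b) \<le> K a b)"
  shows "\<exists>f. f 0 = u \<and> (\<forall>s\<in>{0..1}. f s \<in> G s) \<and>
           (\<forall>a b. 0 \<le> a \<longrightarrow> a \<le> b \<longrightarrow> b \<le> 1 \<longrightarrow> dist (f a) (f b) \<le> K a b)"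
proof -
  define X where "X = product_topology (\<lambda>s. top_of_set (G s)) {0..(1::real)}"
  have topX: "topspace X = (\<Pi>\<^sub>E s\<in>{0..1}. G s)" unfolding X_def by simp
  have cX: "compact_space X" unfolding X_def compact_space_product_topology
    using G by (auto intro!: compact_space_subtopology)
  define C0 where "C0 = {f \<in> topspace X. f 0 \<in> {u}}"
  define C where "C = (\<lambda>(a,b). {f \<in> topspace X. dist (f a) (f b) \<in> {..K a b}})"
  define J where "J = {(a,b). 0 \<le> a \<and> a \<le> b \<and> b \<le> (1::real)}"
  define U where "U = insert C0 (C ` J)"
  have proj: "continuous_map X euclidean (\<lambda>f. f s)" if "s \<in> {0..1}" for s
    unfolding X_def
    by (rule continuous_map_into_fulltopology[OF continuous_map_product_projection[OF that]])
  have u0: "u \<in> G 0" using fin[of "{}"] by auto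
  have clC0: "closedin X C0"
  proof -
    have "{u} = G 0 \<inter> {u}" using u0 by auto
    then have "closedin (top_of_set (G 0)) {u}"
      unfolding closedin_closed by (metis closed_singleton)
    then show ?thesis unfolding C0_def X_def
      by (intro closedin_continuous_map_preimage[OF continuous_map_product_projection]) auto
  qed
  have clC: "closedin X (C p)" if "p \<in> J" for p
  proof -
    obtain a b where p: "p = (a,b)" by force
    have ab: "a \<in> {0..1}" "b \<in> {0..1}" using that p unfolding J_def by auto
    have "continuous_map X euclidean (\<lambda>f. dist (f a) (f b))"
      using continuous_map_mdist[of X euclidean_metric "\<lambda>f. f a" "\<lambda>f. f b"] proj ab by simp
    then have "closedin X {f \<in> topspace X. dist (f a) (f b) \<in> {..K a b}}"
      by (rule closedin_continuous_map_preimage) auto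
    then show ?thesis unfolding C_def p by simp
  qed
  have fip: "\<And>\<U>. (\<forall>D\<in>\<U>. closedin X D) \<Longrightarrow> (\<forall>\<F>. finite \<F> \<and> \<F> \<subseteq> \<U> \<longrightarrow> \<Inter>\<F> \<noteq> {}) \<Longrightarrow> \<Inter>\<U> \<noteq> {}"
  proof -
    fix \<U> assume a1: "\<forall>D\<in>\<U>. closedin X D" and a2: "\<forall>\<F>. finite \<F> \<and> \<F> \<subseteq> \<U> \<longrightarrow> \<Inter>\<F> \<noteq> {}"
    from cX have "\<forall>\<U>. (\<forall>C\<in>\<U>. closedin X C) \<and> (\<forall>\<F>. finite \<F> \<and> \<F> \<subseteq> \<U> \<longrightarrow> \<Inter>\<F> \<noteq> {}) \<longrightarrow> \<Inter>\<U> \<noteq> {}"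
      by (simp only: compact_space_fip)
    then have imp: "(\<forall>C\<in>\<U>. closedin X C) \<and> (\<forall>\<F>. finite \<F> \<and> \<F> \<subseteq> \<U> \<longrightarrow> \<Inter>\<F> \<noteq> {}) \<longrightarrow> \<Inter>\<U> \<noteq> {}"
      by (rule spec)
    show "\<Inter>\<U> \<noteq> {}" by (rule mp[OF imp conjI[OF a1 a2]])
  qed
  have "\<Inter>U \<noteq> {}"
  proof (rule fip)
    show "\<forall>D\<in>U. closedin X D" unfolding U_def using clC0 clC by blast
    show "\<forall>\<F>. finite \<F> \<and> \<F> \<subseteq> U \<longrightarrow> \<Inter>\<F> \<noteq> {}"
    proof (intro allI impI)
      fix \<F> assume \<F>: "finite \<F> \<and> \<F> \<subseteq> U"
      then have sub: "\<F> - {C0} \<subseteq> C ` J" unfolding U_def by blast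
      have "finite (\<F> - {C0})" using \<F> by simp
      from finite_subset_image[OF this sub] obtain J' where J': "J' \<subseteq> J" "finite J'" "\<F> - {C0} = C ` J'"
        by blast
      define S where "S = fst ` J' \<union> snd ` J'"
      have S1: "finite S" using J'(2) by (simp add: S_def)
      have "\<forall>p\<in>J. fst p \<in> {0..1} \<and> snd p \<in> {0..1}" unfolding J_def by auto
      then have S2: "S \<subseteq> {0..1}" using J'(1) unfolding S_def by blast
      note S = S1 S2
      obtain f where f: "f 0 = u" "\<forall>s\<in>insert 0 S. f s \<in> G s"
        "\<forall>a\<in>insert 0 S. \<forall>b\<in>insert 0 S. a \<le> b \<longrightarrow> dist (f a) (f b) \<le> K a b"
        using fin[OF S] by blast
      define f' where "f' = (\<lambda>s. if s \<in> insert 0 S then f s else if s \<in> {0..1} then (SOME x. x \<in> G s) else undefined)"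
      have f'G: "f' s \<in> G s" if "s \<in> {0..1}" for s
      proof (cases "s \<in> insert 0 S")
        case True then show ?thesis using f(2) by (auto simp: f'_def)
      next
        case False
        have "\<exists>x. x \<in> G s" using G[of s] that by auto
        moreover have "f' s = (SOME x. x \<in> G s)" using False that unfolding f'_def by simp
        ultimately show ?thesis by (metis someI_ex)
      qed
      have "f' s = undefined" if "s \<notin> {0..1}" for s
        using that S unfolding f'_def by auto
      then have f'X: "f' \<in> topspace X" unfolding topX using f'G
        by (auto simp: PiE_iff extensional_def)
      have "f' \<in> C0" unfolding C0_def using f'X f(1) by (simp add: f'_def)
      moreover have "f' \<in> C p" if "p \<in> J'" for p
      proof -
        obtain a b where p: "p = (a,b)" by force
        have "a \<in> S" "b \<in> S" unfolding S_def using that p by force+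
        moreover have "a \<le> b" using that p J' unfolding J_def by auto
        ultimately have "dist (f' a) (f' b) \<le> K a b" using f(3) by (simp add: f'_def)
        then show ?thesis unfolding C_def p using f'X by simp
      qed
      ultimately have "f' \<in> \<Inter>\<F>" using J'(3) by blast
      then show "\<Inter>\<F> \<noteq> {}" by blast
    qed
  qed
  then obtain f where f: "f \<in> \<Inter>U" by blast
  have "C0 \<in> U" unfolding U_def by simp
  then have "f \<in> C0" using f by blast
  then have "f 0 = u" "\<forall>s\<in>{0..1}. f s \<in> G s" unfolding C0_def topX by auto
  moreover have "dist (f a) (f b) \<le> K a b" if "0 \<le> a" "a \<le> b" "b \<le> 1" for a b
  proof -
    have "(a,b) \<in> J" unfolding J_def using that by auto
    then have "C (a,b) \<in> U" unfolding U_def by blast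
    then have "f \<in> C (a,b)" using f by blast
    then show ?thesis unfolding C_def by simp
  qed
  ultimately show ?thesis by blast
qed

definition sadd :: "(real \<Rightarrow> real \<Rightarrow> real) \<Rightarrow> bool" where
  "sadd \<omega> \<longleftrightarrow> (\<forall>a b c. 0 \<le> a \<longrightarrow> a \<le> b \<longrightarrow> b \<le> c \<longrightarrow> c \<le> 1 \<longrightarrow> \<omega> a b + \<omega> b c \<le> \<omega> a c) \<and>
     (\<forall>a b. 0 \<le> a \<longrightarrow> a \<le> b \<longrightarrow> b \<le> 1 \<longrightarrow> 0 \<le> \<omega> a b) \<and>
     (\<forall>t0 e. 0 \<le> t0 \<longrightarrow> t0 \<le> 1 \<longrightarrow> e > 0 \<longrightarrow> (\<exists>\<delta>>0. \<forall>t. 0 \<le> t \<longrightarrow> t \<le> 1 \<longrightarrow> t \<noteq> t0 \<longrightarrow> \<bar>t - t0\<bar> < \<delta> \<longrightarrow> \<omega> (min t t0) (max t t0) < e))"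

definition ctrl :: "(real \<Rightarrow> 'a::metric_space) \<Rightarrow> real \<Rightarrow> (real \<Rightarrow> real \<Rightarrow> real) \<Rightarrow> bool" where
  "ctrl \<gamma> c \<omega> \<longleftrightarrow> (\<forall>a b. 0 \<le> a \<longrightarrow> a \<le> b \<longrightarrow> b \<le> 1 \<longrightarrow> dist (\<gamma> a) (\<gamma> b) \<le> c * \<omega> a b)"

lemma step:
  fixes F :: "'a::metric_space \<Rightarrow> 'a set" and \<gamma> :: "real \<Rightarrow> 'a"
  assumes cpt: "\<And>x. F x \<noteq> {} \<and> compact (F x)" and \<beta>: "0 \<le> \<beta>"
    and upc: "uniform_pointwise_contraction UNIV F \<beta>"
    and \<omega>: "sadd \<omega>" and c: "0 \<le> c" and g: "ctrl \<gamma> c \<omega>" and u: "u \<in> F (\<gamma> 0)"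
  shows "\<exists>\<gamma>'. ctrl \<gamma>' (\<beta>*c) \<omega> \<and> \<gamma>' 0 = u \<and> (\<forall>s\<in>{0..1}. \<gamma>' s \<in> F (\<gamma> s))"
proof -
  have sup: "\<And>a b c'. 0 \<le> a \<Longrightarrow> a \<le> b \<Longrightarrow> b \<le> c' \<Longrightarrow> c' \<le> 1 \<Longrightarrow> \<omega> a b + \<omega> b c' \<le> \<omega> a c'"
    using \<omega>[unfolded sadd_def, THEN conjunct1] by blast
  have nn: "\<And>a b. 0 \<le> a \<Longrightarrow> a \<le> b \<Longrightarrow> b \<le> 1 \<Longrightarrow> 0 \<le> \<omega> a b"
    using \<omega>[unfolded sadd_def, THEN conjunct2, THEN conjunct1] by blast
  have cont: "\<And>t0 e. 0 \<le> t0 \<Longrightarrow> t0 \<le> 1 \<Longrightarrow> e > 0 \<Longrightarrow> (\<exists>\<delta>>0. \<forall>t. 0 \<le> t \<longrightarrow> t \<le> 1 \<longrightarrow> t \<noteq> t0 \<longrightarrow> \<bar>t - t0\<bar> < \<delta> \<longrightarrow> \<omega> (min t t0) (max t t0) < e)"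
    using \<omega>[unfolded sadd_def, THEN conjunct2, THEN conjunct2] by blast
  have gd: "\<And>a b. 0 \<le> a \<Longrightarrow> a \<le> b \<Longrightarrow> b \<le> 1 \<Longrightarrow> dist (\<gamma> a) (\<gamma> b) \<le> c * \<omega> a b"
    using g unfolding ctrl_def by blast
  have loc: "\<exists>\<delta>>0. \<forall>t. 0 \<le> t \<longrightarrow> t \<le> 1 \<longrightarrow> \<bar>t - s\<bar> < \<delta> \<longrightarrow>
      hausdorff_dist (F (\<gamma> s)) (F (\<gamma> t)) \<le> \<beta> * dist (\<gamma> s) (\<gamma> t)" if s: "0 \<le> s" "s \<le> 1" for s
  proof -
    obtain N where N: "openin (top_of_set UNIV) N" "\<gamma> s \<in> N"
      "\<forall>y\<in>N. hausdorff_dist (F (\<gamma> s)) (F y) \<le> \<beta> * dist (\<gamma> s) y"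
      using upc unfolding uniform_pointwise_contraction_def by blast
    have "open N" using N(1) by simp
    then obtain r where r: "r > 0" "ball (\<gamma> s) r \<subseteq> N" using N(2) open_contains_ball by blast
    obtain \<delta> where \<delta>: "\<delta> > 0" "\<forall>t. 0 \<le> t \<longrightarrow> t \<le> 1 \<longrightarrow> t \<noteq> s \<longrightarrow> \<bar>t - s\<bar> < \<delta> \<longrightarrow> \<omega> (min t s) (max t s) < r/(c+1)"
      using cont[of s "r/(c+1)"] s r c by auto
    have "\<gamma> t \<in> N" if t: "0 \<le> t" "t \<le> 1" "\<bar>t - s\<bar> < \<delta>" for t
    proof (cases "t = s")
      case True then show ?thesis using N by simp
    next
      case False
      note ts = False
      have d: "dist (\<gamma> s) (\<gamma> t) \<le> c * \<omega> (min t s) (max t s)"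
      proof (cases "s \<le> t")
        case True then show ?thesis using gd[of s t] s t ts by (simp add: min_def max_def)
      next
        case False then show ?thesis using gd[of t s] s t ts by (simp add: min_def max_def dist_commute)
      qed
      have "c * \<omega> (min t s) (max t s) \<le> c * (r/(c+1))"
        using \<delta>(2) t ts c by (intro mult_left_mono) auto
      also have "\<dots> < r" using r c by (simp add: field_simps)
      finally have "dist (\<gamma> s) (\<gamma> t) < r" using d by linarith
      then show ?thesis using r by auto
    qed
    then show ?thesis using N(3) \<delta>(1) by (intro exI[of _ \<delta>]) auto
  qed
  define K where "K a b = \<beta> * c * \<omega> a b" for a b
  have Ksup: "K a b + K b c' \<le> K a c'" if "0 \<le> a" "a \<le> b" "b \<le> c'" "c' \<le> 1" for a b c'
  proof -
    have "\<beta> * c * (\<omega> a b + \<omega> b c') \<le> \<beta> * c * \<omega> a c'"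
      using sup[OF that] \<beta> c by (intro mult_left_mono) auto
    then show ?thesis unfolding K_def by (simp add: algebra_simps)
  qed
  have K0: "0 \<le> K a a" if "0 \<le> a" "a \<le> 1" for a
    unfolding K_def using nn[of a a] that \<beta> c by simp
  have FG: "\<And>s. F (\<gamma> s) \<noteq> {} \<and> compact (F (\<gamma> s))" using cpt by blast
  have P: "hausdorff_dist (F (\<gamma> a)) (F (\<gamma> b)) \<le> K a b" if ab: "0 \<le> a" "a \<le> b" "b \<le> 1" for a b
  proof (rule real_ind[where P="\<lambda>a b. hausdorff_dist (F (\<gamma> a)) (F (\<gamma> b)) \<le> K a b", OF _ _ ab])
    fix a b c' assume h: "0 \<le> a" "a \<le> b" "b \<le> c'" "c' \<le> 1"
      "hausdorff_dist (F (\<gamma> a)) (F (\<gamma> b)) \<le> K a b" "hausdorff_dist (F (\<gamma> b)) (F (\<gamma> c')) \<le> K b c'"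
    have "hausdorff_dist (F (\<gamma> a)) (F (\<gamma> c')) \<le> hausdorff_dist (F (\<gamma> a)) (F (\<gamma> b)) + hausdorff_dist (F (\<gamma> b)) (F (\<gamma> c'))"
      by (rule hd_triangle) (simp_all add: FG)
    then show "hausdorff_dist (F (\<gamma> a)) (F (\<gamma> c')) \<le> K a c'" using h Ksup[of a b c'] by linarith
  next
    fix s :: real assume s: "0 \<le> s" "s \<le> 1"
    obtain \<delta> where \<delta>: "\<delta> > 0" "\<forall>t. 0 \<le> t \<longrightarrow> t \<le> 1 \<longrightarrow> \<bar>t - s\<bar> < \<delta> \<longrightarrow>
      hausdorff_dist (F (\<gamma> s)) (F (\<gamma> t)) \<le> \<beta> * dist (\<gamma> s) (\<gamma> t)" using loc[OF s] by blast
    show "\<exists>\<delta>>0. \<forall>a b. 0 \<le> a \<and> a \<le> s \<and> s \<le> b \<and> b \<le> 1 \<and> s - a < \<delta> \<and> b - s < \<delta> \<longrightarrow>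
          hausdorff_dist (F (\<gamma> a)) (F (\<gamma> b)) \<le> K a b"
    proof (intro exI[of _ \<delta>] conjI allI impI)
      show "\<delta> > 0" by fact
      fix a b assume h: "0 \<le> a \<and> a \<le> s \<and> s \<le> b \<and> b \<le> 1 \<and> s - a < \<delta> \<and> b - s < \<delta>"
      have "hausdorff_dist (F (\<gamma> a)) (F (\<gamma> b)) \<le> hausdorff_dist (F (\<gamma> a)) (F (\<gamma> s)) + hausdorff_dist (F (\<gamma> s)) (F (\<gamma> b))"
        by (rule hd_triangle) (simp_all add: FG)
      also have "\<dots> = hausdorff_dist (F (\<gamma> s)) (F (\<gamma> a)) + hausdorff_dist (F (\<gamma> s)) (F (\<gamma> b))"
        using hd_sym[of "F (\<gamma> a)" "F (\<gamma> s)"] by simp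
      also have "\<dots> \<le> \<beta> * dist (\<gamma> s) (\<gamma> a) + \<beta> * dist (\<gamma> s) (\<gamma> b)"
        using \<delta>(2) h by (intro add_mono) auto
      also have "\<dots> \<le> \<beta> * (c * \<omega> a s) + \<beta> * (c * \<omega> s b)"
        using gd[of a s] gd[of s b] h \<beta> by (intro add_mono mult_left_mono) (auto simp: dist_commute)
      also have "\<dots> = K a s + K s b" unfolding K_def by (simp add: algebra_simps)
      also have "\<dots> \<le> K a b" using Ksup[of a s b] h by auto
      finally show "hausdorff_dist (F (\<gamma> a)) (F (\<gamma> b)) \<le> K a b" .
    qed
  qed
  have fin: "\<exists>f. f 0 = u \<and> (\<forall>s\<in>insert 0 S. f s \<in> F (\<gamma> s)) \<and>
           (\<forall>a\<in>insert 0 S. \<forall>b\<in>insert 0 S. a \<le> b \<longrightarrow> dist (f a) (f b) \<le> K a b)"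
    if "finite S" "S \<subseteq> {0..1}" for S
    by (rule greedy[where G="\<lambda>s. F (\<gamma> s)", OF FG P Ksup K0 u that])
  obtain f where f: "f 0 = u" "\<forall>s\<in>{0..1}. f s \<in> F (\<gamma> s)"
    "\<forall>a b. 0 \<le> a \<longrightarrow> a \<le> b \<longrightarrow> b \<le> 1 \<longrightarrow> dist (f a) (f b) \<le> K a b"
    using tych[where G="\<lambda>s. F (\<gamma> s)" and u=u and K=K, OF FG fin] by blast
  have "ctrl f (\<beta>*c) \<omega>" unfolding ctrl_def using f(3) unfolding K_def by simp
  then show ?thesis using f by blast
qed

fun pvar :: "(real \<Rightarrow> 'a::metric_space) \<Rightarrow> real list \<Rightarrow> real" where
  "pvar p (x # y # xs) = dist (p x) (p y) + pvar p (y # xs)"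
| "pvar p _ = 0"

definition chain :: "real \<Rightarrow> real \<Rightarrow> real list \<Rightarrow> bool" where
  "chain a b xs \<longleftrightarrow> xs \<noteq> [] \<and> hd xs = a \<and> last xs = b \<and> sorted_wrt (<) xs"

lemma pvar_app: "pvar p (xs @ y # ys) = pvar p (xs @ [y]) + pvar p (y # ys)"
proof (induction xs)
  case Nil then show ?case by simp
next
  case (Cons x xs)
  then show ?case by (cases xs) auto
qed

lemma pvar_nonneg: "0 \<le> pvar p xs"
  by (induction p xs rule: pvar.induct) auto

lemma chain_range:
  assumes "chain a b xs" "x \<in> set xs" shows "a \<le> x \<and> x \<le> b"
proof -
  obtain h t where ht: "xs = h # t" using assms unfolding chain_def by (cases xs) auto
  have "a \<le> x" using assms ht unfolding chain_def by auto
  moreover obtain t' l where tl: "xs = t' @ [l]" using assms unfolding chain_def by (metis append_butlast_last_id)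
  have "x \<le> b" using assms tl unfolding chain_def by (auto simp: sorted_wrt_append)
  ultimately show ?thesis by simp
qed

lemma chain_concat:
  assumes "chain a b xs" "chain b c ys"
  shows "chain a c (xs @ tl ys) \<and> pvar p (xs @ tl ys) = pvar p xs + pvar p ys"
proof -
  obtain ys' where ys: "ys = b # ys'" using assms(2) unfolding chain_def by (cases ys) auto
  obtain xs' where xs: "xs = xs' @ [b]" using assms(1) unfolding chain_def by (metis append_butlast_last_id)
  have "pvar p (xs @ tl ys) = pvar p xs + pvar p ys"
    using pvar_app[of p xs' b ys'] xs ys by simp
  moreover have "chain a c (xs @ tl ys)"
  proof -
    have s1: "sorted_wrt (<) xs" "sorted_wrt (<) ys'" "\<forall>y\<in>set ys'. b < y"
      using assms ys unfolding chain_def by auto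
    have "\<forall>x\<in>set xs. x \<le> b" using chain_range[OF assms(1)] by blast
    then have "sorted_wrt (<) (xs @ ys')" using s1 by (force simp: sorted_wrt_append)
    moreover have "last (xs @ ys') = c"
      using assms ys xs unfolding chain_def by (cases "ys' = []") auto
    moreover have "hd (xs @ ys') = a" using assms unfolding chain_def by simp
    ultimately show ?thesis unfolding chain_def ys using xs by simp
  qed
  ultimately show ?thesis by blast
qed

definition seg :: "real \<Rightarrow> real \<Rightarrow> real list" where
  "seg a b = (if a = b then [a] else [a, b])"

lemma seg: "a \<le> b \<Longrightarrow> chain a b (seg a b) \<and> pvar p (seg a b) = dist (p a) (p b)"
  unfolding seg_def chain_def by auto

lemma pvar_sum_lt: "pvar p xs = (\<Sum>i<length xs - 1. dist (p (xs!i)) (p (xs!Suc i)))"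
proof (induction p xs rule: pvar.induct)
  case (1 p x y xs)
  then show ?case by (simp del: sum.lessThan_Suc add: sum.lessThan_Suc_shift)
qed auto

lemma chain_variation_sums:
  assumes "chain 0 1 xs" shows "pvar p xs \<in> variation_sums p"
proof -
  define n where "n = length xs - 1"
  have len: "length xs = Suc n" using assms unfolding chain_def n_def by (cases xs) auto
  have part: "is_partition (\<lambda>i. xs ! i) n"
    unfolding is_partition_def
  proof (intro conjI allI impI)
    show "xs ! 0 = 0" using assms unfolding chain_def by (metis hd_conv_nth)
    show "xs ! n = 1" using assms len unfolding chain_def by (metis last_conv_nth diff_Suc_1)
    fix i assume "i < n"
    then show "xs ! i < xs ! Suc i" using assms len unfolding chain_def
      by (simp add: sorted_wrt_iff_nth_less)
  qed
  have "pvar p xs = (\<Sum>i\<in>{1..n}. dist (p (xs ! (i - 1))) (p (xs ! i)))"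
    unfolding pvar_sum_lt n_def[symmetric]
    by (simp add: sum.atLeast1_atMost_eq)
  then show ?thesis unfolding variation_sums_def using part by blast
qed

definition V :: "(real \<Rightarrow> 'a::metric_space) \<Rightarrow> real \<Rightarrow> real \<Rightarrow> real" where
  "V p a b = Sup (pvar p ` {xs. chain a b xs})"

locale rpath =
  fixes p :: "real \<Rightarrow> 'a::metric_space" and B :: real
  assumes bnd: "\<And>xs. chain 0 1 xs \<Longrightarrow> pvar p xs \<le> B"
    and pc: "continuous_on {0..1} p"
begin

lemma bound_ab:
  assumes "0 \<le> a" "a \<le> b" "b \<le> 1" "chain a b xs"
  shows "pvar p xs \<le> B"
proof -
  have 1: "chain 0 a (seg 0 a)" "pvar p (seg 0 a) = dist (p 0) (p a)" using seg assms by blast+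
  have 2: "chain b 1 (seg b 1)" "pvar p (seg b 1) = dist (p b) (p 1)" using seg assms by blast+
  have 3: "chain 0 b (seg 0 a @ tl xs)" "pvar p (seg 0 a @ tl xs) = pvar p (seg 0 a) + pvar p xs"
    using chain_concat[OF 1(1) assms(4)] by blast+
  have 4: "chain 0 1 ((seg 0 a @ tl xs) @ tl (seg b 1))"
     "pvar p ((seg 0 a @ tl xs) @ tl (seg b 1)) = pvar p (seg 0 a @ tl xs) + pvar p (seg b 1)"
    using chain_concat[OF 3(1) 2(1)] by blast+
  have "pvar p ((seg 0 a @ tl xs) @ tl (seg b 1)) \<le> B" using bnd 4(1) by blast
  then show ?thesis using 4(2) 3(2) 1(2) 2(2) by (smt (verit) zero_le_dist)
qed

lemma V_ge:
  assumes "0 \<le> a" "a \<le> b" "b \<le> 1" "chain a b xs"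
  shows "pvar p xs \<le> V p a b"
  unfolding V_def
proof (rule cSup_upper)
  show "pvar p xs \<in> pvar p ` {xs. chain a b xs}" using assms by blast
  show "bdd_above (pvar p ` {xs. chain a b xs})"
    using bound_ab[OF assms(1-3)] by (intro bdd_aboveI[of _ B]) auto
qed

lemma V_le:
  assumes "a \<le> b" "\<And>xs. chain a b xs \<Longrightarrow> pvar p xs \<le> z"
  shows "V p a b \<le> z"
  unfolding V_def
proof (rule cSup_least)
  show "pvar p ` {xs. chain a b xs} \<noteq> {}" using seg[OF assms(1)] by blast
  show "\<And>x. x \<in> pvar p ` {xs. chain a b xs} \<Longrightarrow> x \<le> z" using assms(2) by blast
qed

lemma V1: "0 \<le> a \<Longrightarrow> a \<le> b \<Longrightarrow> b \<le> 1 \<Longrightarrow> dist (p a) (p b) \<le> V p a b"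
  using V_ge seg by metis

lemma V2:
  assumes "0 \<le> a" "a \<le> b" "b \<le> c" "c \<le> 1"
  shows "V p a b + V p b c \<le> V p a c"
proof -
  have "pvar p xs + pvar p ys \<le> V p a c" if "chain a b xs" "chain b c ys" for xs ys
  proof -
    have cc: "chain a c (xs @ tl ys) \<and> pvar p (xs @ tl ys) = pvar p xs + pvar p ys" by (rule chain_concat[OF that])
    then show ?thesis using V_ge[of a c "xs @ tl ys"] assms by simp
  qed
  then have "pvar p xs \<le> V p a c - V p b c" if "chain a b xs" for xs
    using V_le[of b c "V p a c - pvar p xs"] assms that by force
  then have "V p a b \<le> V p a c - V p b c" using V_le[of a b] assms by blast
  then show ?thesis by simp
qed

lemma pcont:
  assumes "0 \<le> s" "s \<le> 1" "e > 0"
  obtains d where "d > 0" "\<And>t. 0 \<le> t \<Longrightarrow> t \<le> 1 \<Longrightarrow> \<bar>t - s\<bar> < d \<Longrightarrow> dist (p s) (p t) < e"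
proof -
  have "s \<in> {0..1}" using assms by auto
  then obtain d where "d > 0" "\<forall>x'\<in>{0..1}. dist x' s < d \<longrightarrow> dist (p x') (p s) < e"
    using pc assms(3) unfolding continuous_on_iff by blast
  then show ?thesis using that by (auto simp: dist_real_def dist_commute)
qed

lemma Vright:
  assumes "0 \<le> s" "s < 1" "e > 0"
  shows "\<exists>\<delta>>0. \<forall>t. s < t \<longrightarrow> t < s + \<delta> \<longrightarrow> t \<le> 1 \<longrightarrow> V p s t < e"
proof -
  define L where "L = V p s 1"
  obtain xs where xs: "chain s 1 xs" "pvar p xs > L - e/2"
  proof (rule ccontr)
    assume "\<not> thesis"
    then have "\<And>xs. chain s 1 xs \<Longrightarrow> pvar p xs \<le> L - e/2" using that by force
    then have "L \<le> L - e/2" unfolding L_def using assms by (intro V_le) auto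
    then show False using assms by simp
  qed
  obtain ys where ys: "xs = s # ys" using xs unfolding chain_def by (cases xs) auto
  have ysne: "ys \<noteq> []" using xs ys assms unfolding chain_def by auto
  define x1 where "x1 = hd ys"
  have x1: "s < x1" using xs ys ysne unfolding chain_def x1_def by auto
  have chys: "chain x1 1 ys" using xs ys ysne unfolding chain_def x1_def by auto
  have pxs: "pvar p xs = dist (p s) (p x1) + pvar p ys"
    using ys ysne unfolding x1_def by (cases ys) auto
  obtain d where d: "d > 0" "\<And>t. 0 \<le> t \<Longrightarrow> t \<le> 1 \<Longrightarrow> \<bar>t - s\<bar> < d \<Longrightarrow> dist (p s) (p t) < e/2"
    using pcont[of s "e/2"] assms by auto
  show ?thesis
  proof (intro exI[of _ "min d (x1 - s)"] conjI allI impI)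
    show "min d (x1 - s) > 0" using d x1 by auto
    fix t assume t: "s < t" "t < s + min d (x1 - s)" "t \<le> 1"
    have cht: "chain t 1 (t # ys)" using chys t unfolding chain_def by (cases ys) auto
    have pt: "pvar p (t # ys) = dist (p t) (p x1) + pvar p ys"
      using ys ysne unfolding x1_def by (cases ys) auto
    have "pvar p zs \<le> e/2 + dist (p s) (p t)" if zs: "chain s t zs" for zs
    proof -
      have "pvar p zs + pvar p (t # ys) \<le> L"
      proof -
        have cc: "chain s 1 (zs @ tl (t # ys)) \<and> pvar p (zs @ tl (t # ys)) = pvar p zs + pvar p (t # ys)"
          by (rule chain_concat[OF zs cht])
        then show ?thesis using V_ge[of s 1 "zs @ tl (t # ys)"] assms unfolding L_def by simp
      qed
      moreover have "dist (p s) (p x1) \<le> dist (p s) (p t) + dist (p t) (p x1)" by (rule dist_triangle)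
      ultimately show ?thesis using xs(2) pxs pt by linarith
    qed
    then have "V p s t \<le> e/2 + dist (p s) (p t)" using t by (intro V_le) auto
    moreover have "dist (p s) (p t) < e/2" using d t assms by auto
    ultimately show "V p s t < e" by linarith
  qed
qed

lemma Vleft:
  assumes "0 < s" "s \<le> 1" "e > 0"
  shows "\<exists>\<delta>>0. \<forall>t. s - \<delta> < t \<longrightarrow> t < s \<longrightarrow> 0 \<le> t \<longrightarrow> V p t s < e"
proof -
  define L where "L = V p 0 s"
  obtain xs where xs: "chain 0 s xs" "pvar p xs > L - e/2"
  proof (rule ccontr)
    assume "\<not> thesis"
    then have "\<And>xs. chain 0 s xs \<Longrightarrow> pvar p xs \<le> L - e/2" using that by force
    then have "L \<le> L - e/2" unfolding L_def using assms by (intro V_le) auto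
    then show False using assms by simp
  qed
  obtain ys where ys: "xs = ys @ [s]" using xs unfolding chain_def by (metis append_butlast_last_id)
  have ysne: "ys \<noteq> []" using xs ys assms unfolding chain_def by auto
  define xk where "xk = last ys"
  obtain ys' where ys': "ys = ys' @ [xk]" using ysne unfolding xk_def by (metis append_butlast_last_id)
  have xk: "xk < s" using xs ys ys' unfolding chain_def by (auto simp: sorted_wrt_append)
  have chys: "chain 0 xk ys" using xs ys ysne unfolding chain_def xk_def by (auto simp: sorted_wrt_append)
  have pxs: "pvar p xs = pvar p ys + dist (p xk) (p s)"
    using pvar_app[of p ys' xk "[s]"] ys ys' by simp
  obtain d where d: "d > 0" "\<And>t. 0 \<le> t \<Longrightarrow> t \<le> 1 \<Longrightarrow> \<bar>t - s\<bar> < d \<Longrightarrow> dist (p s) (p t) < e/2"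
    using pcont[of s "e/2"] assms by auto
  show ?thesis
  proof (intro exI[of _ "min d (s - xk)"] conjI allI impI)
    show "min d (s - xk) > 0" using d xk by auto
    fix t assume t: "s - min d (s - xk) < t" "t < s" "0 \<le> t"
    have "\<forall>x\<in>set ys. x \<le> xk" using chain_range[OF chys] by blast
    then have cht: "chain 0 t (ys @ [t])" using chys t unfolding chain_def
      by (auto simp: sorted_wrt_append)
    have pt: "pvar p (ys @ [t]) = pvar p ys + dist (p xk) (p t)"
      using pvar_app[of p ys' xk "[t]"] ys' by simp
    have "pvar p zs \<le> e/2 + dist (p s) (p t)" if zs: "chain t s zs" for zs
    proof -
      have "pvar p (ys @ [t]) + pvar p zs \<le> L"
      proof -
        have cc: "chain 0 s ((ys @ [t]) @ tl zs) \<and> pvar p ((ys @ [t]) @ tl zs) = pvar p (ys @ [t]) + pvar p zs"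
          by (rule chain_concat[OF cht zs])
        then show ?thesis using V_ge[of 0 s "(ys @ [t]) @ tl zs"] assms unfolding L_def by simp
      qed
      moreover have "dist (p xk) (p s) \<le> dist (p xk) (p t) + dist (p s) (p t)" by (metis dist_commute dist_triangle)
      ultimately show ?thesis using xs(2) pxs pt by linarith
    qed
    then have "V p t s \<le> e/2 + dist (p s) (p t)" using t by (intro V_le) auto
    moreover have "dist (p s) (p t) < e/2" using d t assms by auto
    ultimately show "V p t s < e" by linarith
  qed
qed

lemma sadd_V: "sadd (V p)"
  unfolding sadd_def
proof (intro conjI allI impI)
  fix a b c :: real assume "0 \<le> a" "a \<le> b" "b \<le> c" "c \<le> 1"
  then show "V p a b + V p b c \<le> V p a c" by (rule V2)
next
  fix a b :: real assume "0 \<le> a" "a \<le> b" "b \<le> 1"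
  then show "0 \<le> V p a b" using V1 zero_le_dist order_trans by metis
next
  fix t0 e :: real assume h: "0 \<le> t0" "t0 \<le> 1" "0 < e"
  obtain d1 where d1: "d1 > 0" "\<forall>t. t0 < t \<longrightarrow> t < t0 + d1 \<longrightarrow> t \<le> 1 \<longrightarrow> V p t0 t < e"
  proof (cases "t0 < 1")
    case True then show ?thesis using Vright[of t0 e] h that by blast
  next
    case False then show ?thesis using that[of 1] h by auto
  qed
  obtain d2 where d2: "d2 > 0" "\<forall>t. t0 - d2 < t \<longrightarrow> t < t0 \<longrightarrow> 0 \<le> t \<longrightarrow> V p t t0 < e"
  proof (cases "0 < t0")
    case True then show ?thesis using Vleft[of t0 e] h that by blast
  next
    case False then show ?thesis using that[of 1] h by auto
  qed
  show "\<exists>\<delta>>0. \<forall>t. 0 \<le> t \<longrightarrow> t \<le> 1 \<longrightarrow> t \<noteq> t0 \<longrightarrow> \<bar>t - t0\<bar> < \<delta> \<longrightarrow> V p (min t t0) (max t t0) < e"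
  proof (intro exI[of _ "min d1 d2"] conjI allI impI)
    show "min d1 d2 > 0" using d1 d2 by simp
    fix t assume t: "0 \<le> t" "t \<le> 1" "t \<noteq> t0" "\<bar>t - t0\<bar> < min d1 d2"
    show "V p (min t t0) (max t t0) < e"
    proof (cases "t0 < t")
      case True
      have "t < t0 + d1" using t by auto
      then have "V p t0 t < e" using d1(2) True t by blast
      then show ?thesis using True by (simp add: min_def max_def)
    next
      case False
      then have tt: "t < t0" using t by auto
      have "t0 - d2 < t" using t by auto
      then have "V p t t0 < e" using d2(2) tt t by blast
      then show ?thesis using tt by (simp add: min_def max_def)
    qed
  qed
qed

lemma ctrl_V: "ctrl p 1 (V p)"
  unfolding ctrl_def using V1 by simp

end

lemma geom_cauchy:
  fixes x :: "nat \<Rightarrow> 'a::metric_space"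
  assumes b: "0 \<le> \<beta>" "\<beta> < 1" and W: "0 \<le> W" and d: "\<And>n. dist (x n) (x (Suc n)) \<le> W * \<beta>^n"
  shows "Cauchy x"
proof -
  have k: "(1 - \<beta>) * dist (x m) (x (m + k)) \<le> W * \<beta>^m - W * \<beta>^(m + k)" for m k
  proof (induction k)
    case 0 then show ?case by simp
  next
    case (Suc k)
    define q where "q = \<beta>^(m + k)"
    have qS: "\<beta>^(m + Suc k) = \<beta> * q" unfolding q_def by simp
    have t: "dist (x m) (x (m + Suc k)) \<le> dist (x m) (x (m + k)) + W * q"
      using dist_triangle[of "x m" "x (m + Suc k)" "x (m + k)"] d[of "m+k"] unfolding q_def
      by (simp add: dist_commute)
    have "(1 - \<beta>) * dist (x m) (x (m + Suc k)) \<le> (1 - \<beta>) * (dist (x m) (x (m + k)) + W * q)"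
      using b t by (intro mult_left_mono) auto
    also have "\<dots> = (1 - \<beta>) * dist (x m) (x (m + k)) + (1 - \<beta>) * (W * q)"
      by (simp add: algebra_simps)
    finally have t2: "(1 - \<beta>) * dist (x m) (x (m + Suc k)) \<le> (1 - \<beta>) * dist (x m) (x (m + k)) + (1 - \<beta>) * (W * q)" .
    have eq: "W * \<beta>^m - W * q + (1 - \<beta>) * (W * q) = W * \<beta>^m - W * \<beta>^(m + Suc k)"
      unfolding qS by (simp add: algebra_simps)
    have "(1 - \<beta>) * dist (x m) (x (m + Suc k)) \<le> W * \<beta>^m - W * q + (1 - \<beta>) * (W * q)"
      using t2 Suc unfolding q_def by linarith
    then show ?case using eq by linarith
  qed
  have k2: "(1 - \<beta>) * dist (x m) (x n) \<le> W * \<beta>^m" if mn: "m \<le> n" for m n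
  proof -
    obtain k where n: "n = m + k" using le_Suc_ex[OF mn] by (elim exE)
    have "0 \<le> \<beta>^(m+k)" using b(1) by (rule zero_le_power)
    then have "0 \<le> W * \<beta>^(m+k)" by (rule mult_nonneg_nonneg[OF W])
    then have "(1 - \<beta>) * dist (x m) (x (m + k)) \<le> W * \<beta>^m" using k[of m k] by linarith
    then show ?thesis unfolding n .
  qed
  show ?thesis
  proof (rule metric_CauchyI)
    fix e :: real assume e: "e > 0"
    have pos: "e * (1 - \<beta>) / (2 * W + 1) > 0" using e b W by simp
    obtain M where M: "\<beta>^M < e * (1 - \<beta>) / (2 * W + 1)"
      using real_arch_pow_inv[OF pos b(2)] by blast
    have "\<beta>^M * (2 * W + 1) < e * (1 - \<beta>)"
      using M W by (subst (asm) pos_less_divide_eq) auto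
    then have M2: "(2 * W + 1) * \<beta>^M < e * (1 - \<beta>)" by (simp only: mult.commute)
    have "dist (x m) (x n) < e" if "m \<ge> M" "n \<ge> M" for m n
    proof -
      have "dist (x m) (x n) \<le> dist (x M) (x m) + dist (x M) (x n)" by (rule dist_triangle3)
      then have "(1 - \<beta>) * dist (x m) (x n) \<le> (1 - \<beta>) * (dist (x M) (x m) + dist (x M) (x n))"
        using b by (intro mult_left_mono) auto
      also have "\<dots> = (1 - \<beta>) * dist (x M) (x m) + (1 - \<beta>) * dist (x M) (x n)"
        by (simp only: distrib_left)
      also have "\<dots> \<le> W * \<beta>^M + W * \<beta>^M" using k2[of M m] k2[of M n] that by linarith
      also have "\<dots> \<le> (2 * W + 1) * \<beta>^M" using b by (simp add: algebra_simps)
      also have "\<dots> < e * (1 - \<beta>)" by (rule M2)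
      finally have "(1 - \<beta>) * dist (x m) (x n) < (1 - \<beta>) * e" by (simp only: mult.commute)
      then show ?thesis using b mult_less_cancel_left_pos[of "1 - \<beta>"] by simp
    qed
    then show "\<exists>M. \<forall>m\<ge>M. \<forall>n\<ge>M. dist (x m) (x n) < e" by blast
  qed
qed

theorem proposition14:
  fixes F :: "'a::metric_space \<Rightarrow> 'a set" and \<beta> :: real
  assumes "complete (UNIV :: 'a set)"
    and "rectifiably_path_connected (UNIV :: 'a set)"
    and "\<And>x. F x \<noteq> {} \<and> compact (F x)"
    and "0 \<le> \<beta>" and "\<beta> < 1"
    and "uniform_pointwise_contraction UNIV F \<beta>"
  shows "{x. x \<in> F x} \<noteq> {}"
proof -
  note cpt = assms(3) and b0 = assms(4) and b1 = assms(5) and upc = assms(6)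
  define x0 :: 'a where "x0 = undefined"
  have "F x0 \<noteq> {}" using cpt by simp
  then obtain x1 where x1: "x1 \<in> F x0" by blast
  have rp: "\<forall>x\<in>(UNIV::'a set). \<forall>y\<in>(UNIV::'a set). \<exists>p. continuous_on {0..1} p \<and> p ` {0..1::real} \<subseteq> UNIV \<and>
        p 0 = x \<and> p 1 = y \<and> path_length p < \<infinity>"
    using assms(2) unfolding rectifiably_path_connected_def .
  have "\<exists>p. continuous_on {0..1} p \<and> p ` {0..1::real} \<subseteq> UNIV \<and> p 0 = x0 \<and> p 1 = x1 \<and> path_length p < \<infinity>"
    by (rule rp[rule_format, OF UNIV_I UNIV_I])
  then obtain p where p0: "continuous_on {0..1} p \<and> p ` {0..1::real} \<subseteq> UNIV \<and> p 0 = x0 \<and> p 1 = x1 \<and> path_length p < \<infinity>"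
    by (rule exE)
  have p: "continuous_on {0..1} p" "p 0 = x0" "p 1 = x1" "path_length p < \<infinity>" using p0 by simp_all
  have c01: "chain 0 1 [0,1]" unfolding chain_def by simp
  have vne: "pvar p [0,1] \<in> variation_sums p" by (rule chain_variation_sums[OF c01])
  have le: "ereal s \<le> path_length p" if "s \<in> variation_sums p" for s
    unfolding path_length_def using that by (rule SUP_upper)
  obtain B where B: "path_length p = ereal B"
    using p(4) le[OF vne] by (cases "path_length p") auto
  have bnd: "pvar p xs \<le> B" if "chain 0 1 xs" for xs
    using le[OF chain_variation_sums[OF that]] B by simp
  interpret rpath p B using bnd p(1) by unfold_locales auto
  define \<omega> where "\<omega> = V p"
  have om: "sadd \<omega>" unfolding \<omega>_def by (rule sadd_V)
  have c0: "ctrl p 1 \<omega>" unfolding \<omega>_def by (rule ctrl_V)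
  define g where "g = rec_nat p (\<lambda>n \<gamma>. SOME \<gamma>'. ctrl \<gamma>' (\<beta>^Suc n) \<omega> \<and> \<gamma>' 0 = \<gamma> 1 \<and> (\<forall>s\<in>{0..1}. \<gamma>' s \<in> F (\<gamma> s)))"
  have g0: "g 0 = p" unfolding g_def by simp
  have gS: "g (Suc n) = (SOME \<gamma>'. ctrl \<gamma>' (\<beta>^Suc n) \<omega> \<and> \<gamma>' 0 = g n 1 \<and> (\<forall>s\<in>{0..1}. \<gamma>' s \<in> F (g n s)))" for n
    unfolding g_def by simp
  have Q: "ctrl (g (Suc n)) (\<beta>^Suc n) \<omega> \<and> g (Suc n) 0 = g n 1 \<and> (\<forall>s\<in>{0..1}. g (Suc n) s \<in> F (g n s))"
    if P: "ctrl (g n) (\<beta>^n) \<omega>" "g n 1 \<in> F (g n 0)" for n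
  proof -
    have bn: "0 \<le> \<beta>^n" using b0 by simp
    obtain \<gamma>' where "ctrl \<gamma>' (\<beta>*\<beta>^n) \<omega> \<and> \<gamma>' 0 = g n 1 \<and> (\<forall>s\<in>{0..1}. \<gamma>' s \<in> F (g n s))"
      using step[OF cpt b0 upc om bn P(1) P(2)] by blast
    then have ex: "\<exists>\<gamma>'. ctrl \<gamma>' (\<beta>^Suc n) \<omega> \<and> \<gamma>' 0 = g n 1 \<and> (\<forall>s\<in>{0..1}. \<gamma>' s \<in> F (g n s))"
      by (intro exI[of _ \<gamma>']) simp
    show ?thesis unfolding gS by (rule someI_ex[OF ex])
  qed
  have P: "ctrl (g n) (\<beta>^n) \<omega> \<and> g n 1 \<in> F (g n 0)" for n
  proof (induction n)
    case 0 show ?case using c0 g0 p x1 by simp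
  next
    case (Suc n)
    have q: "ctrl (g (Suc n)) (\<beta>^Suc n) \<omega> \<and> g (Suc n) 0 = g n 1 \<and> (\<forall>s\<in>{0..1}. g (Suc n) s \<in> F (g n s))"
      using Q Suc.IH by blast
    then have "g (Suc n) 1 \<in> F (g n 1)" by simp
    then show ?case using q by simp
  qed
  have inv: "ctrl (g n) (\<beta>^n) \<omega> \<and> g n 1 \<in> F (g n 0) \<and> g (Suc n) 0 = g n 1" for n
    using P[of n] Q[of n] by blast
  define x where "x n = g n 0" for n
  define W where "W = \<omega> 0 1"
  have W: "0 \<le> W" using om unfolding sadd_def W_def by simp
  have xs: "x (Suc n) \<in> F (x n)" for n using inv[of n] unfolding x_def by simp
  have xd: "dist (x n) (x (Suc n)) \<le> W * \<beta>^n" for n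
    using inv[of n] unfolding x_def W_def ctrl_def by (simp add: mult.commute)
  have "Cauchy x" by (rule geom_cauchy[OF b0 b1 W xd])
  then obtain l where l: "x \<longlonglongrightarrow> l" using assms(1) by (blast elim: completeE)
  obtain N where N: "openin (top_of_set UNIV) N" "l \<in> N"
    "\<forall>y\<in>N. hausdorff_dist (F l) (F y) \<le> \<beta> * dist l y"
    using upc unfolding uniform_pointwise_contraction_def by blast
  have "open N" using N(1) by simp
  have "infdist l (F l) \<le> e" if e: "e > 0" for e
  proof -
    have ev: "eventually (\<lambda>n. x n \<in> N \<and> dist (x n) l < e/2) sequentially"
      using topological_tendstoD[OF l \<open>open N\<close> N(2)] tendstoD[OF l, of "e/2"] e
      by (simp add: eventually_conj)
    then obtain M where M: "\<And>n. n \<ge> M \<Longrightarrow> x n \<in> N \<and> dist (x n) l < e/2"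
      unfolding eventually_sequentially by blast
    have "infdist l (F l) \<le> infdist (x (Suc M)) (F l) + dist l (x (Suc M))" by (rule infdist_triangle)
    also have "infdist (x (Suc M)) (F l) \<le> hausdorff_dist (F (x M)) (F l)"
      using hd_infdist[of "F (x M)" "F l"] cpt xs by blast
    also have "\<dots> = hausdorff_dist (F l) (F (x M))" by (rule hd_sym)
    also have "\<dots> \<le> \<beta> * dist l (x M)" using N(3) M[of M] by blast
    also have "\<dots> \<le> dist l (x M)" using b1 by (simp add: mult_left_le_one_le b0)
    finally show ?thesis using M[of M] M[of "Suc M"] by (simp add: dist_commute)
  qed
  then have "infdist l (F l) \<le> 0" by (metis field_le_epsilon add_0)
  then have "infdist l (F l) = 0" using infdist_nonneg[of l "F l"] by simp
  then have "l \<in> F l" using in_closed_iff_infdist_zero[of "F l" l] cpt compact_imp_closed by blast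
  then show ?thesis by blast
qed

end
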